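(* Let $n,m\ge 3$ and let $G=P_n\square P_m$ be the grid graph. No minimal resolving set of $G$ contains three vertices that are on the same line.
   Context: The grid graph $P_n\square P_m$ has vertex set $\{(i,j):0\le i\le n-1,\ 0\le j\le m-1\}$, with $(i,j)$ adjacent to $(k,l)$ iff $|i-k|+|j-l|=1$; distance $d((i,j),(k,l))=|i-k|+|j-l|$. A vertex $w$ resolves $u,v$ if $d(w,u)\ne d(w,v)$; a set $R$ is resolving if every pair of distinct vertices is resolved by some vertex of $R$; a minimal resolving set is a resolving set $R$ such that no $R\setminus\{x\}$, $x\in R$, is resolving. Vertices are on the same line if they all share their first coordinate or all share their second coordinate. *)

theory Defs
  imports Main
begin

definition grid_vertices :: "nat \<Rightarrow> nat \<Rightarrow> (nat \<times> nat) set" where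
  "grid_vertices n m = {(i, j). i < n \<and> j < m}"

definition grid_dist :: "nat \<times> nat \<Rightarrow> nat \<times> nat \<Rightarrow> nat" where
  "grid_dist u v = nat \<bar>int (fst u) - int (fst v)\<bar> + nat \<bar>int (snd u) - int (snd v)\<bar>"

definition resolves :: "nat \<times> nat \<Rightarrow> nat \<times> nat \<Rightarrow> nat \<times> nat \<Rightarrow> bool" where
  "resolves w u v \<longleftrightarrow> grid_dist w u \<noteq> grid_dist w v"

definition resolving_set :: "nat \<Rightarrow> nat \<Rightarrow> (nat \<times> nat) set \<Rightarrow> bool" where
  "resolving_set n m R \<longleftrightarrow> R \<subseteq> grid_vertices n m \<and>
     (\<forall>u \<in> grid_vertices n m. \<forall>v \<in> grid_vertices n m. u \<noteq> v \<longrightarrow> (\<exists>w \<in> R. resolves w u v))"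

definition minimal_resolving_set :: "nat \<Rightarrow> nat \<Rightarrow> (nat \<times> nat) set \<Rightarrow> bool" where
  "minimal_resolving_set n m R \<longleftrightarrow> resolving_set n m R \<and>
     (\<forall>x \<in> R. \<not> resolving_set n m (R - {x}))"

definition same_line :: "(nat \<times> nat) set \<Rightarrow> bool" where
  "same_line S \<longleftrightarrow> (\<exists>a. \<forall>v \<in> S. fst v = a) \<or> (\<exists>b. \<forall>v \<in> S. snd v = b)"

end

theory Submission
  imports Defs
begin

lemma key_int:
  fixes a b c q1 q2 A :: int
  assumes "a < b" "b < c" "A + \<bar>a-q1\<bar> - \<bar>a-q2\<bar> = 0" "A + \<bar>c-q1\<bar> - \<bar>c-q2\<bar> = 0"
  shows "A + \<bar>b-q1\<bar> - \<bar>b-q2\<bar> = 0"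
  using assms by (simp add: abs_if split: if_splits)

lemma gd_int: "int (grid_dist u v) = \<bar>int (fst u) - int (fst v)\<bar> + \<bar>int (snd u) - int (snd v)\<bar>"
  unfolding grid_dist_def by simp

lemma mid_row:
  assumes "fst x = fst y" "fst y = fst z" "snd x < snd y" "snd y < snd z"
    "grid_dist x u = grid_dist x v" "grid_dist z u = grid_dist z v"
  shows "grid_dist y u = grid_dist y v"
proof -
  define A where "A = \<bar>int (fst y) - int (fst u)\<bar> - \<bar>int (fst y) - int (fst v)\<bar>"
  have 1: "A + \<bar>int (snd x) - int (snd u)\<bar> - \<bar>int (snd x) - int (snd v)\<bar> = 0"
    using arg_cong[OF assms(5), of int] assms(1) unfolding gd_int A_def by simp
  have 2: "A + \<bar>int (snd z) - int (snd u)\<bar> - \<bar>int (snd z) - int (snd v)\<bar> = 0"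
    using arg_cong[OF assms(6), of int] assms(2) unfolding gd_int A_def by simp
  have "A + \<bar>int (snd y) - int (snd u)\<bar> - \<bar>int (snd y) - int (snd v)\<bar> = 0"
    by (rule key_int[OF _ _ 1 2]) (use assms in auto)
  then have "int (grid_dist y u) = int (grid_dist y v)" unfolding gd_int A_def by simp
  then show ?thesis by simp
qed

lemma mid_col:
  assumes "snd x = snd y" "snd y = snd z" "fst x < fst y" "fst y < fst z"
    "grid_dist x u = grid_dist x v" "grid_dist z u = grid_dist z v"
  shows "grid_dist y u = grid_dist y v"
proof -
  define A where "A = \<bar>int (snd y) - int (snd u)\<bar> - \<bar>int (snd y) - int (snd v)\<bar>"
  have 1: "A + \<bar>int (fst x) - int (fst u)\<bar> - \<bar>int (fst x) - int (fst v)\<bar> = 0"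
    using arg_cong[OF assms(5), of int] assms(1) unfolding gd_int A_def by simp
  have 2: "A + \<bar>int (fst z) - int (fst u)\<bar> - \<bar>int (fst z) - int (fst v)\<bar> = 0"
    using arg_cong[OF assms(6), of int] assms(2) unfolding gd_int A_def by simp
  have "A + \<bar>int (fst y) - int (fst u)\<bar> - \<bar>int (fst y) - int (fst v)\<bar> = 0"
    by (rule key_int[OF _ _ 1 2]) (use assms in auto)
  then have "int (grid_dist y u) = int (grid_dist y v)" unfolding gd_int A_def by simp
  then show ?thesis by simp
qed

lemma mid_any:
  assumes "(fst x = fst y \<and> fst y = fst z \<and> snd x < snd y \<and> snd y < snd z) \<or>
           (snd x = snd y \<and> snd y = snd z \<and> fst x < fst y \<and> fst y < fst z)"
    "resolves y u v"
  shows "resolves x u v \<or> resolves z u v"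
  using assms mid_row[of x y z u v] mid_col[of x y z u v] unfolding resolves_def by blast

lemma remove_ok:
  assumes "resolving_set n m R" "x \<in> R" "z \<in> R" "x \<noteq> y" "z \<noteq> y"
    "\<And>u v. resolves y u v \<Longrightarrow> resolves x u v \<or> resolves z u v"
  shows "resolving_set n m (R - {y})"
  using assms unfolding resolving_set_def by blast

lemma mid_exists:
  assumes "x \<noteq> y" "x \<noteq> z" "y \<noteq> z" "same_line {x, y, z}"
  shows "\<exists>p q r. {p,q,r} = {x,y,z} \<and> p \<noteq> q \<and> r \<noteq> q \<and>
     ((fst p = fst q \<and> fst q = fst r \<and> snd p < snd q \<and> snd q < snd r) \<or>
      (snd p = snd q \<and> snd q = snd r \<and> fst p < fst q \<and> fst q < fst r))"
proof -
  obtain x1 x2 y1 y2 z1 z2 where e: "x = (x1,x2)" "y = (y1,y2)" "z = (z1,z2)"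
    by (cases x, cases y, cases z) auto
  from assms(4) have "(x1 = y1 \<and> y1 = z1) \<or> (x2 = y2 \<and> y2 = z2)"
    unfolding same_line_def e by auto
  then show ?thesis
  proof
    assume h: "x1 = y1 \<and> y1 = z1"
    then have d: "x2 \<noteq> y2" "x2 \<noteq> z2" "y2 \<noteq> z2" using assms(1-3) e by auto
    show ?thesis
    proof -
      have "(x2 < y2 \<and> y2 < z2) \<or> (z2 < y2 \<and> y2 < x2) \<or> (y2 < x2 \<and> x2 < z2)
        \<or> (z2 < x2 \<and> x2 < y2) \<or> (x2 < z2 \<and> z2 < y2) \<or> (y2 < z2 \<and> z2 < x2)"
        using d by linarith
      then show ?thesis
      proof (elim disjE)
        assume "x2 < y2 \<and> y2 < z2" then show ?thesis
          by (intro exI[of _ x] exI[of _ y] exI[of _ z]) (use h e in auto)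
      next
        assume "z2 < y2 \<and> y2 < x2" then show ?thesis
          by (intro exI[of _ z] exI[of _ y] exI[of _ x]) (use h e in auto)
      next
        assume "y2 < x2 \<and> x2 < z2" then show ?thesis
          by (intro exI[of _ y] exI[of _ x] exI[of _ z]) (use h e in auto)
      next
        assume "z2 < x2 \<and> x2 < y2" then show ?thesis
          by (intro exI[of _ z] exI[of _ x] exI[of _ y]) (use h e in auto)
      next
        assume "x2 < z2 \<and> z2 < y2" then show ?thesis
          by (intro exI[of _ x] exI[of _ z] exI[of _ y]) (use h e in auto)
      next
        assume "y2 < z2 \<and> z2 < x2" then show ?thesis
          by (intro exI[of _ y] exI[of _ z] exI[of _ x]) (use h e in auto)
      qed
    qed
  next
    assume h: "x2 = y2 \<and> y2 = z2"
    then have d: "x1 \<noteq> y1" "x1 \<noteq> z1" "y1 \<noteq> z1" using assms(1-3) e by auto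
    show ?thesis
    proof -
      have "(x1 < y1 \<and> y1 < z1) \<or> (z1 < y1 \<and> y1 < x1) \<or> (y1 < x1 \<and> x1 < z1)
        \<or> (z1 < x1 \<and> x1 < y1) \<or> (x1 < z1 \<and> z1 < y1) \<or> (y1 < z1 \<and> z1 < x1)"
        using d by linarith
      then show ?thesis
      proof (elim disjE)
        assume "x1 < y1 \<and> y1 < z1" then show ?thesis
          by (intro exI[of _ x] exI[of _ y] exI[of _ z]) (use h e in auto)
      next
        assume "z1 < y1 \<and> y1 < x1" then show ?thesis
          by (intro exI[of _ z] exI[of _ y] exI[of _ x]) (use h e in auto)
      next
        assume "y1 < x1 \<and> x1 < z1" then show ?thesis
          by (intro exI[of _ y] exI[of _ x] exI[of _ z]) (use h e in auto)
      next
        assume "z1 < x1 \<and> x1 < y1" then show ?thesis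
          by (intro exI[of _ z] exI[of _ x] exI[of _ y]) (use h e in auto)
      next
        assume "x1 < z1 \<and> z1 < y1" then show ?thesis
          by (intro exI[of _ x] exI[of _ z] exI[of _ y]) (use h e in auto)
      next
        assume "y1 < z1 \<and> z1 < x1" then show ?thesis
          by (intro exI[of _ y] exI[of _ z] exI[of _ x]) (use h e in auto)
      qed
    qed
  qed
qed

theorem lemma5:
  fixes n m :: nat and R :: "(nat \<times> nat) set"
  assumes "n \<ge> 3" and "m \<ge> 3"
    and "minimal_resolving_set n m R"
  shows "\<not> (\<exists>x y z. x \<in> R \<and> y \<in> R \<and> z \<in> R \<and> x \<noteq> y \<and> x \<noteq> z \<and> y \<noteq> z
                 \<and> same_line {x, y, z})"
proof
  assume "\<exists>x y z. x \<in> R \<and> y \<in> R \<and> z \<in> R \<and> x \<noteq> y \<and> x \<noteq> z \<and> y \<noteq> z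
                 \<and> same_line {x, y, z}"
  then obtain x y z where h: "x \<in> R" "y \<in> R" "z \<in> R" "x \<noteq> y" "x \<noteq> z" "y \<noteq> z"
    "same_line {x, y, z}" by blast
  from mid_exists[OF h(4-7)] obtain p q r where
    pqr: "{p,q,r} = {x,y,z}" "p \<noteq> q" "r \<noteq> q"
    "(fst p = fst q \<and> fst q = fst r \<and> snd p < snd q \<and> snd q < snd r) \<or>
      (snd p = snd q \<and> snd q = snd r \<and> fst p < fst q \<and> fst q < fst r)" by blast
  have sub: "{p,q,r} \<subseteq> R" using pqr(1) h(1-3) by simp
  have inR: "p \<in> R" "q \<in> R" "r \<in> R" using sub by auto
  have rs: "resolving_set n m R" and mn: "\<forall>x\<in>R. \<not> resolving_set n m (R - {x})"
    using assms(3) unfolding minimal_resolving_set_def by auto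
  have "resolving_set n m (R - {q})"
    by (rule remove_ok[OF rs inR(1) inR(3) pqr(2) pqr(3)]) (rule mid_any[OF pqr(4)])
  with mn inR(2) show False by blast
qed

end
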